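(* Let $c=\sqrt[3]{5589+891\sqrt{33}}/8=2.7551046130\ldots$ There is an absolute constant $C>0$ such that for every $n\ge1$ and every $A\subseteq\mathbb{F}_3^n$ for which the equation $a+b+c'=0$ with $a,b,c'\in A$ has no solutions except $a=b=c'$, one has $|A|\le C\,c^n$.
   Context: $\mathbb{F}_3$ is the field of integers modulo $3$. *)

theory Defs
  imports Complex_Main "HOL-Library.Numeral_Type"
begin

text \<open>The field F_3 is the numeral type 3 (integers mod 3).
  F_3^n is represented as functions nat => 3 vanishing outside {0..<n}.\<close>

definition F3vec :: "nat \<Rightarrow> (nat \<Rightarrow> 3) set" where
  "F3vec n = {x. \<forall>i\<ge>n. x i = 0}"

definition cap_c :: real where
  "cap_c = root 3 (5589 + 891 * sqrt 33) / 8"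

end

theory Submission
  imports Defs "HOL-Library.FuncSet"
begin

lemma three_cases: "(x::3) = 0 \<or> x = 1 \<or> x = 2"
proof (cases x)
  case (of_int z)
  then have "z = 0 \<or> z = 1 \<or> z = 2" by auto
  then show ?thesis using of_int by auto
qed
lemma inv3: "(x::3) \<noteq> 0 \<Longrightarrow> x * x = 1"
  using three_cases[of x] by auto

lemma L1:
  fixes f :: "'i \<Rightarrow> 's \<Rightarrow> 3"
  assumes "finite I"
  shows "finite S \<Longrightarrow> \<exists>w. (\<forall>i\<in>I. (\<Sum>s\<in>S. w s * f i s) = 0) \<and> card S \<le> card I + card {s\<in>S. w s \<noteq> 0}"
  using assms
proof (induction I arbitrary: S f rule: finite_induct)
  case empty
  show ?case by (rule exI[of _ "\<lambda>_. 1"]) simp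
next
  case (insert i0 I)
  show ?case
  proof (cases "\<forall>s\<in>S. f i0 s = 0")
    case True
    obtain w where w: "\<forall>i\<in>I. (\<Sum>s\<in>S. w s * f i s) = 0" "card S \<le> card I + card {s\<in>S. w s \<noteq> 0}"
      using insert.IH[OF insert.prems(1)] by blast
    show ?thesis
      using w True insert.hyps by (intro exI[of _ w]) auto
  next
    case False
    then obtain s0 where s0: "s0 \<in> S" "f i0 s0 \<noteq> 0" by blast
    define u where "u = f i0 s0"
    have u: "f i0 s0 * u = 1" using inv3[OF s0(2)] by (simp add: u_def)
    define g where "g i s = f i s - f i s0 * u * f i0 s" for i s
    define S' where "S' = S - {s0}"
    have fS': "finite S'" using insert.prems by (simp add: S'_def)
    obtain w' where w': "\<forall>i\<in>I. (\<Sum>s\<in>S'. w' s * g i s) = 0" "card S' \<le> card I + card {s\<in>S'. w' s \<noteq> 0}"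
      using insert.IH[OF fS', of g] by blast
    define w where "w s = (if s = s0 then - u * (\<Sum>s\<in>S'. w' s * f i0 s) else w' s)" for s
    have split: "(\<Sum>s\<in>S. w s * h s) = w s0 * h s0 + (\<Sum>s\<in>S'. w' s * h s)" for h
    proof -
      have "(\<Sum>s\<in>S. w s * h s) = w s0 * h s0 + (\<Sum>s\<in>S'. w s * h s)"
        unfolding S'_def by (rule sum.remove[OF insert.prems s0(1)])
      also have "(\<Sum>s\<in>S'. w s * h s) = (\<Sum>s\<in>S'. w' s * h s)"
        by (rule sum.cong) (auto simp: w_def S'_def)
      finally show ?thesis .
    qed
    have "\<forall>i\<in>insert i0 I. (\<Sum>s\<in>S. w s * f i s) = 0"
    proof
      fix i assume i: "i \<in> insert i0 I"
      show "(\<Sum>s\<in>S. w s * f i s) = 0"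
      proof (cases "i = i0")
        case True
        have "w s0 * f i0 s0 = - (f i0 s0 * u) * (\<Sum>s\<in>S'. w' s * f i0 s)"
          by (simp add: w_def algebra_simps)
        then show ?thesis using True u split[of "f i0"] by simp
      next
        case False
        then have iI: "i \<in> I" using i by auto
        have "0 = (\<Sum>s\<in>S'. w' s * g i s)" using w' iI by auto
        also have "\<dots> = (\<Sum>s\<in>S'. w' s * f i s) - f i s0 * u * (\<Sum>s\<in>S'. w' s * f i0 s)"
          by (simp add: g_def algebra_simps sum_subtractf sum_distrib_left)
        also have "\<dots> = (\<Sum>s\<in>S. w s * f i s)"
          using split[of "f i"] by (simp add: w_def algebra_simps)
        finally show ?thesis by simp
      qed
    qed
    moreover have "card S \<le> card (insert i0 I) + card {s\<in>S. w s \<noteq> 0}"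
    proof -
      have "card S = Suc (card S')" using s0 insert.prems unfolding S'_def using card_Suc_Diff1[of S s0] by simp
      moreover have "card {s\<in>S'. w' s \<noteq> 0} \<le> card {s\<in>S. w s \<noteq> 0}"
        by (rule card_mono) (use insert.prems in \<open>auto simp: w_def S'_def\<close>)
      ultimately show ?thesis using w'(2) insert.hyps by simp
    qed
    ultimately show ?thesis by blast
  qed
qed

lemma L2:
  fixes v :: "'s \<Rightarrow> 3" and a b :: "'i \<Rightarrow> 's \<Rightarrow> 3"
  assumes fS: "finite S" and fI: "finite I"
    and eq: "\<And>x y. x \<in> S \<Longrightarrow> y \<in> S \<Longrightarrow> (if x = y then v x else 0) = (\<Sum>i\<in>I. a i x * b i y)"
  shows "card {x\<in>S. v x \<noteq> 0} \<le> card I"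
proof -
  define S0 where "S0 = {x\<in>S. v x \<noteq> 0}"
  have fS0: "finite S0" using fS by (simp add: S0_def)
  obtain w where w: "\<forall>i\<in>I. (\<Sum>y\<in>S0. w y * b i y) = 0" "card S0 \<le> card I + card {y\<in>S0. w y \<noteq> 0}"
    using L1[OF fI fS0, of b] by blast
  have "w x = 0" if x: "x \<in> S0" for x
  proof -
    have "(\<Sum>y\<in>S0. w y * (if x = y then v x else 0)) = w x * v x"
      using x fS0 by (simp add: if_distrib cong: if_cong)
    moreover have "(\<Sum>y\<in>S0. w y * (if x = y then v x else 0)) = (\<Sum>y\<in>S0. w y * (\<Sum>i\<in>I. a i x * b i y))"
      by (rule sum.cong) (use x eq in \<open>auto simp: S0_def\<close>)
    moreover have "\<dots> = (\<Sum>i\<in>I. a i x * (\<Sum>y\<in>S0. w y * b i y))"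
      by (simp add: sum_distrib_left sum_distrib_right algebra_simps sum.swap[of _ S0])
    moreover have "\<dots> = 0" using w(1) by simp
    ultimately have "w x * v x = 0" by simp
    moreover have "v x \<noteq> 0" using x by (simp add: S0_def)
    ultimately have "w x * v x * v x = 0" by simp
    then show "w x = 0" using inv3[OF \<open>v x \<noteq> 0\<close>] by (simp add: mult.assoc)
  qed
  then have e: "{y\<in>S0. w y \<noteq> 0} = {}" by auto
  have "card S0 \<le> card I" using w(2) unfolding e by simp
  then show ?thesis by (simp add: S0_def)
qed
lemma L3:
  fixes A :: "'s set" and fx :: "'i1 \<Rightarrow> 's \<Rightarrow> 3" and fy :: "'i2 \<Rightarrow> 's \<Rightarrow> 3" and fz :: "'i3 \<Rightarrow> 's \<Rightarrow> 3"
  assumes fA: "finite A" and fI: "finite I1" "finite I2" "finite I3"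
    and eq: "\<And>x y z. x \<in> A \<Longrightarrow> y \<in> A \<Longrightarrow> z \<in> A \<Longrightarrow>
      (if x = y \<and> y = z then 1 else 0) =
        (\<Sum>i\<in>I1. fx i x * gx i y z) + (\<Sum>i\<in>I2. fy i y * gy i x z) + (\<Sum>i\<in>I3. fz i z * gz i x y)"
  shows "card A \<le> card I1 + card I2 + card I3"
proof -
  obtain w where w: "\<forall>i\<in>I3. (\<Sum>z\<in>A. w z * fz i z) = 0" "card A \<le> card I3 + card {z\<in>A. w z \<noteq> 0}"
    using L1[OF fI(3) fA, of fz] by blast
  define a where "a j x = (case j of Inl i \<Rightarrow> fx i x | Inr i \<Rightarrow> (\<Sum>z\<in>A. w z * gy i x z))" for j x
  define b where "b j y = (case j of Inl i \<Rightarrow> (\<Sum>z\<in>A. w z * gx i y z) | Inr i \<Rightarrow> fy i y)" for j y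
  have "(if x = y then w x else 0) = (\<Sum>j\<in>I1 <+> I2. a j x * b j y)" if x: "x \<in> A" and y: "y \<in> A" for x y
  proof -
    have "(\<Sum>z\<in>A. w z * (if x = y \<and> y = z then 1 else 0)) = (if x = y then w x else 0)"
      using x fA by (auto simp: if_distrib cong: if_cong)
    moreover have "(\<Sum>z\<in>A. w z * (if x = y \<and> y = z then 1 else 0)) =
      (\<Sum>z\<in>A. w z * ((\<Sum>i\<in>I1. fx i x * gx i y z) + (\<Sum>i\<in>I2. fy i y * gy i x z) + (\<Sum>i\<in>I3. fz i z * gz i x y)))"
      by (rule sum.cong) (use x y eq in auto)
    moreover have "\<dots> = (\<Sum>i\<in>I1. fx i x * (\<Sum>z\<in>A. w z * gx i y z)) + (\<Sum>i\<in>I2. fy i y * (\<Sum>z\<in>A. w z * gy i x z))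
       + (\<Sum>i\<in>I3. gz i x y * (\<Sum>z\<in>A. w z * fz i z))"
      by (simp add: distrib_left sum.distrib sum_distrib_left sum.swap[of _ A] algebra_simps)
    moreover have "(\<Sum>i\<in>I3. gz i x y * (\<Sum>z\<in>A. w z * fz i z)) = 0" using w(1) by simp
    moreover have "(\<Sum>j\<in>I1 <+> I2. a j x * b j y) = (\<Sum>i\<in>I1. fx i x * (\<Sum>z\<in>A. w z * gx i y z)) + (\<Sum>i\<in>I2. fy i y * (\<Sum>z\<in>A. w z * gy i x z))"
      using fI by (simp add: sum.Plus a_def b_def mult.commute)
    ultimately show ?thesis by simp
  qed
  then have "card {x\<in>A. w x \<noteq> 0} \<le> card (I1 <+> I2)"
    by (intro L2[OF fA]) (use fI in auto)
  then show ?thesis using w(2) fI by (simp add: card_Plus)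
qed
lemma delta3: "(1::3) - t^2 = (if t = 0 then 1 else 0)"
  using three_cases[of t] by (auto simp: power2_eq_square)
lemma trip3: "(x::3) + x + x = 0"
  using three_cases[of x] by auto

definition Tr :: "(nat \<times> nat \<times> nat) set" where
  "Tr = {(0,0,0),(2,0,0),(0,2,0),(0,0,2),(1,1,0),(0,1,1),(1,0,1)}"
definition cf :: "nat \<times> nat \<times> nat \<Rightarrow> 3" where
  "cf t = (if t = (0,0,0) then 1 else if t \<in> {(2,0,0),(0,2,0),(0,0,2)} then -1 else -2)"
definition mon :: "nat \<Rightarrow> (nat \<Rightarrow> 3) \<Rightarrow> (nat \<Rightarrow> nat) \<Rightarrow> 3" where
  "mon n x \<alpha> = (\<Prod>i<n. x i ^ \<alpha> i)"
definition deg :: "nat \<Rightarrow> (nat \<Rightarrow> nat) \<Rightarrow> nat" where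
  "deg n \<alpha> = (\<Sum>i<n. \<alpha> i)"
definition p1 :: "nat \<Rightarrow> (nat \<Rightarrow> nat \<times> nat \<times> nat) \<Rightarrow> nat \<Rightarrow> nat" where
  "p1 n e = restrict (\<lambda>i. fst (e i)) {..<n}"
definition p2 :: "nat \<Rightarrow> (nat \<Rightarrow> nat \<times> nat \<times> nat) \<Rightarrow> nat \<Rightarrow> nat" where
  "p2 n e = restrict (\<lambda>i. fst (snd (e i))) {..<n}"
definition p3 :: "nat \<Rightarrow> (nat \<Rightarrow> nat \<times> nat \<times> nat) \<Rightarrow> nat \<Rightarrow> nat" where
  "p3 n e = restrict (\<lambda>i. snd (snd (e i))) {..<n}"
definition CC :: "nat \<Rightarrow> (nat \<Rightarrow> nat \<times> nat \<times> nat) \<Rightarrow> 3" where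
  "CC n e = (\<Prod>i<n. cf (e i))"

lemma poly1: "(1::3) - (a+b+c)^2 = (\<Sum>t\<in>Tr. cf t * (a ^ fst t * b ^ fst (snd t) * c ^ snd (snd t)))"
  by (simp add: Tr_def cf_def power2_eq_square algebra_simps)

lemma expand:
  "(\<Prod>i<n. (1::3) - (x i + y i + z i)^2) =
   (\<Sum>e\<in>PiE {..<n} (\<lambda>_. Tr). CC n e * mon n x (p1 n e) * mon n y (p2 n e) * mon n z (p3 n e))"
proof -
  have "(\<Prod>i<n. (1::3) - (x i + y i + z i)^2) =
     (\<Prod>i<n. \<Sum>t\<in>Tr. cf t * (x i ^ fst t * y i ^ fst (snd t) * z i ^ snd (snd t)))"
    by (simp add: poly1)
  also have "\<dots> = (\<Sum>e\<in>PiE {..<n} (\<lambda>_. Tr). \<Prod>i<n. cf (e i) * (x i ^ fst (e i) * y i ^ fst (snd (e i)) * z i ^ snd (snd (e i))))"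
    by (rule prod_sum_PiE) (auto simp: Tr_def)
  also have "\<dots> = (\<Sum>e\<in>PiE {..<n} (\<lambda>_. Tr). CC n e * mon n x (p1 n e) * mon n y (p2 n e) * mon n z (p3 n e))"
    by (rule sum.cong) (simp_all add: prod.distrib CC_def mon_def p1_def p2_def p3_def)
  finally show ?thesis .
qed

lemma prod_ind: "(\<Prod>i<(n::nat). (if P i then 1 else 0::3)) = (if \<forall>i<n. P i then 1 else 0)"
  by (induction n) (auto simp: less_Suc_eq)

lemma Tr_sum: "t \<in> Tr \<Longrightarrow> fst t + fst (snd t) + snd (snd t) \<le> 2"
  by (auto simp: Tr_def)
lemma Tr_range: "t \<in> Tr \<Longrightarrow> fst t \<in> {0,1,2} \<and> fst (snd t) \<in> {0,1,2} \<and> snd (snd t) \<in> {0,1,2}"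
  by (auto simp: Tr_def)

lemma deg_sum: "e \<in> PiE {..<n} (\<lambda>_. Tr) \<Longrightarrow> deg n (p1 n e) + deg n (p2 n e) + deg n (p3 n e) \<le> 2 * n"
proof -
  assume e: "e \<in> PiE {..<n} (\<lambda>_. Tr)"
  have "deg n (p1 n e) + deg n (p2 n e) + deg n (p3 n e) = (\<Sum>i<n. fst (e i) + fst (snd (e i)) + snd (snd (e i)))"
    by (simp add: deg_def p1_def p2_def p3_def sum.distrib)
  also have "\<dots> \<le> (\<Sum>i<n. 2)"
  proof (rule sum_mono)
    fix i assume "i \<in> {..<n}"
    then have "e i \<in> Tr" using e by (auto simp: PiE_iff)
    then show "fst (e i) + fst (snd (e i)) + snd (snd (e i)) \<le> 2" by (rule Tr_sum)
  qed
  finally show ?thesis by simp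
qed

definition Mon :: "nat \<Rightarrow> (nat \<Rightarrow> nat) set" where
  "Mon n = {\<alpha> \<in> PiE {..<n} (\<lambda>_. {0,1,2}). 3 * deg n \<alpha> \<le> 2 * n}"

lemma finite_Mon: "finite (Mon n)"
  unfolding Mon_def by (rule finite_subset[OF _ finite_PiE[of "{..<n}" "\<lambda>_. {0,1,2::nat}"]]) auto

lemma p_range: "e \<in> PiE {..<n} (\<lambda>_. Tr) \<Longrightarrow> p1 n e \<in> PiE {..<n} (\<lambda>_. {0,1,2}) \<and> p2 n e \<in> PiE {..<n} (\<lambda>_. {0,1,2}) \<and> p3 n e \<in> PiE {..<n} (\<lambda>_. {0,1,2})"
proof -
  assume e: "e \<in> PiE {..<n} (\<lambda>_. Tr)"
  have "\<And>i. i < n \<Longrightarrow> e i \<in> Tr" using e by (auto simp: PiE_iff)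
  then have "\<And>i. i < n \<Longrightarrow> fst (e i) \<in> {0,1,2} \<and> fst (snd (e i)) \<in> {0,1,2} \<and> snd (snd (e i)) \<in> {0,1,2}"
    using Tr_range by blast
  then show ?thesis by (auto simp: p1_def p2_def p3_def PiE_iff)
qed


lemma cap_comb:
  assumes fA: "finite A" and sub: "A \<subseteq> F3vec n"
    and cap: "\<forall>a\<in>A. \<forall>b\<in>A. \<forall>c\<in>A. (\<forall>i. a i + b i + c i = 0) \<longrightarrow> a = b \<and> b = c"
  shows "card A \<le> 3 * card (Mon n)"
proof -
  define E where "E = PiE {..<n} (\<lambda>_. Tr)"
  have fE: "finite E" unfolding E_def by (rule finite_PiE) (auto simp: Tr_def)
  define E1 where "E1 = {e\<in>E. 3 * deg n (p1 n e) \<le> 2 * n}"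
  define E2 where "E2 = {e\<in>E. \<not> 3 * deg n (p1 n e) \<le> 2 * n \<and> 3 * deg n (p2 n e) \<le> 2 * n}"
  define E3 where "E3 = {e\<in>E. \<not> 3 * deg n (p1 n e) \<le> 2 * n \<and> \<not> 3 * deg n (p2 n e) \<le> 2 * n}"
  have fE123: "finite E1" "finite E2" "finite E3" using fE by (auto simp: E1_def E2_def E3_def)
  have E3deg: "3 * deg n (p3 n e) \<le> 2 * n" if "e \<in> E3" for e
    using that deg_sum[of e n] by (auto simp: E3_def E_def)
  define h where "h x y z e = CC n e * mon n x (p1 n e) * mon n y (p2 n e) * mon n z (p3 n e)" for x y z e
  define I1 where "I1 = p1 n ` E1"
  define I2 where "I2 = p2 n ` E2"
  define I3 where "I3 = p3 n ` E3"
  define g1 where "g1 \<alpha> y z = (\<Sum>e\<in>{e\<in>E1. p1 n e = \<alpha>}. CC n e * mon n y (p2 n e) * mon n z (p3 n e))" for \<alpha> y z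
  define g2 where "g2 \<alpha> x z = (\<Sum>e\<in>{e\<in>E2. p2 n e = \<alpha>}. CC n e * mon n x (p1 n e) * mon n z (p3 n e))" for \<alpha> x z
  define g3 where "g3 \<alpha> x y = (\<Sum>e\<in>{e\<in>E3. p3 n e = \<alpha>}. CC n e * mon n x (p1 n e) * mon n y (p2 n e))" for \<alpha> x y
  have "card A \<le> card I1 + card I2 + card I3"
  proof (rule L3[OF fA, where fx = "\<lambda>\<alpha> x. mon n x \<alpha>" and fy = "\<lambda>\<alpha> x. mon n x \<alpha>" and fz = "\<lambda>\<alpha> x. mon n x \<alpha>"
        and gx = g1 and gy = g2 and gz = g3])
    show "finite I1" "finite I2" "finite I3" using fE123 by (auto simp: I1_def I2_def I3_def)
    fix x y z assume x: "x \<in> A" and y: "y \<in> A" and z: "z \<in> A"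
    have "(\<forall>i<n. x i + y i + z i = 0) \<longleftrightarrow> x = y \<and> y = z"
    proof
      assume H: "\<forall>i<n. x i + y i + z i = 0"
      have "\<forall>i. x i + y i + z i = 0"
      proof
        fix i show "x i + y i + z i = 0"
        proof (cases "i < n")
          case True then show ?thesis using H by blast
        next
          case False
          have "x \<in> F3vec n" "y \<in> F3vec n" "z \<in> F3vec n" using sub x y z by auto
          then show ?thesis using False by (simp add: F3vec_def)
        qed
      qed
      then show "x = y \<and> y = z" using cap x y z by blast
    next
      assume e: "x = y \<and> y = z"
      show "\<forall>i<n. x i + y i + z i = 0"
      proof (intro allI impI)
        fix i show "x i + y i + z i = 0" using e trip3[of "z i"] by simp
      qed
    qed
    then have "(if x = y \<and> y = z then 1 else 0) = (\<Prod>i<n. (1::3) - (x i + y i + z i)^2)"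
      by (simp add: delta3 prod_ind)
    also have "\<dots> = (\<Sum>e\<in>E. h x y z e)" unfolding expand E_def h_def ..
    also have "E = E1 \<union> (E2 \<union> E3)" by (auto simp: E1_def E2_def E3_def)
    also have "(\<Sum>e\<in>E1 \<union> (E2 \<union> E3). h x y z e) = (\<Sum>e\<in>E1. h x y z e) + (\<Sum>e\<in>E2. h x y z e) + (\<Sum>e\<in>E3. h x y z e)"
    proof -
      have d1: "E1 \<inter> (E2 \<union> E3) = {}" "E2 \<inter> E3 = {}" by (auto simp: E1_def E2_def E3_def)
      show ?thesis using fE123 by (simp add: sum.union_disjoint d1)
    qed
    also have "(\<Sum>e\<in>E1. h x y z e) = (\<Sum>\<alpha>\<in>I1. mon n x \<alpha> * g1 \<alpha> y z)"
      unfolding I1_def g1_def sum.image_gen[OF fE123(1), of "h x y z" "p1 n"]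
      by (rule sum.cong[OF refl]) (auto simp: sum_distrib_left h_def algebra_simps intro!: sum.cong)
    also have "(\<Sum>e\<in>E2. h x y z e) = (\<Sum>\<alpha>\<in>I2. mon n y \<alpha> * g2 \<alpha> x z)"
      unfolding I2_def g2_def sum.image_gen[OF fE123(2), of "h x y z" "p2 n"]
      by (rule sum.cong[OF refl]) (auto simp: sum_distrib_left h_def algebra_simps intro!: sum.cong)
    also have "(\<Sum>e\<in>E3. h x y z e) = (\<Sum>\<alpha>\<in>I3. mon n z \<alpha> * g3 \<alpha> x y)"
      unfolding I3_def g3_def sum.image_gen[OF fE123(3), of "h x y z" "p3 n"]
      by (rule sum.cong[OF refl]) (auto simp: sum_distrib_left h_def algebra_simps intro!: sum.cong)
    finally show "(if x = y \<and> y = z then 1 else 0) =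
        (\<Sum>i\<in>I1. mon n x i * g1 i y z) + (\<Sum>i\<in>I2. mon n y i * g2 i x z) + (\<Sum>i\<in>I3. mon n z i * g3 i x y)" .
  qed
  moreover have "card I1 \<le> card (Mon n)"
  proof (rule card_mono[OF finite_Mon], rule subsetI)
    fix a assume "a \<in> I1"
    then obtain e where e: "e \<in> E1" "a = p1 n e" by (auto simp: I1_def)
    then have "e \<in> PiE {..<n} (\<lambda>_. Tr)" by (simp add: E1_def E_def)
    from p_range[OF this] e show "a \<in> Mon n" by (simp add: Mon_def E1_def)
  qed
  moreover have "card I2 \<le> card (Mon n)"
  proof (rule card_mono[OF finite_Mon], rule subsetI)
    fix a assume "a \<in> I2"
    then obtain e where e: "e \<in> E2" "a = p2 n e" by (auto simp: I2_def)
    then have "e \<in> PiE {..<n} (\<lambda>_. Tr)" by (simp add: E2_def E_def)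
    from p_range[OF this] e show "a \<in> Mon n" by (simp add: Mon_def E2_def)
  qed
  moreover have "card I3 \<le> card (Mon n)"
  proof (rule card_mono[OF finite_Mon], rule subsetI)
    fix a assume "a \<in> I3"
    then obtain e where e: "e \<in> E3" "a = p3 n e" by (auto simp: I3_def)
    then have "e \<in> PiE {..<n} (\<lambda>_. Tr)" by (simp add: E3_def E_def)
    from p_range[OF this] e E3deg[OF e(1)] show "a \<in> Mon n" by (simp add: Mon_def)
  qed
  ultimately show ?thesis by linarith
qed

lemma cap_c_eq:
  defines "x0 \<equiv> (sqrt 33 - 1) / 8"
  shows "cap_c = (1 + x0 + x0^2) / root 3 (x0^2)" and "0 < x0" and "x0 \<le> 1"
proof -
  define s where "s = sqrt 33"
  have s2: "s * s = 33" by (simp add: s_def)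
  have "sqrt (36::real) = 6" using real_sqrt_abs[of "6::real"] by simp
  then have s6: "s < 6" unfolding s_def using real_sqrt_less_iff[of 33 36] by simp
  have s5: "5 < s" "s < 6" using s6 unfolding s_def by (simp_all add: real_less_rsqrt)
  then show "0 < x0" "x0 \<le> 1" by (simp_all add: x0_def s_def)
  have x0s: "x0 = (s - 1)/8" by (simp add: x0_def s_def)
  have sq: "(s - 1)^2 = 34 - 2*s"
  proof -
    have "(s - 1)^2 = s*s - 2*s + 1" by (simp add: power2_eq_square algebra_simps)
    then show ?thesis using s2 by simp
  qed
  have x2: "x0^2 = (17 - s)/32"
  proof -
    have "x0^2 = (s - 1)^2/64" by (simp add: x0s power_divide)
    then show ?thesis using sq by simp
  qed
  have q: "1 + x0 + x0^2 = (45 + 3*s)/32"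
    by (subst x2) (simp add: x0s field_simps)
  have cube: "(45 + 3*s)^3 = 131220 + 19116*s"
  proof -
    have "(45 + 3*s)^3 = 91125 + 18225*s + 1215*(s*s) + 27*(s*s)*s"
      by (simp add: power3_eq_cube algebra_simps)
    then show ?thesis by (simp add: s2 algebra_simps)
  qed
  have rhs: "2 * (17 - s) * (5589 + 891 * s) = 131220 + 19116*s"
  proof -
    have "2 * (17 - s) * (5589 + 891 * s) = 190026 + 19116 * s - 1782*(s*s)"
      by (simp add: algebra_simps)
    then show ?thesis by (simp add: s2)
  qed
  have xpos: "0 < x0^2" using \<open>0 < x0\<close> by simp
  define r where "r = (1 + x0 + x0^2) / root 3 (x0^2)"
  have rpos: "0 < r" unfolding r_def using \<open>0 < x0\<close> xpos by (intro divide_pos_pos) (simp_all add: add_pos_pos)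
  have "r^3 = (1 + x0 + x0^2)^3 / x0^2"
    unfolding r_def power_divide using xpos by (simp add: real_root_pow_pos2)
  also have "\<dots> = ((45 + 3*s)/32)^3 / ((17 - s)/32)" by (subst q, subst x2, rule refl)
  also have "\<dots> = (45 + 3*s)^3 / (1024 * (17 - s))"
    using s5 by (simp add: power_divide field_simps)
  also have "\<dots> = (2 * (17 - s) * (5589 + 891 * s)) / (1024 * (17 - s))"
    unfolding cube rhs ..
  also have "\<dots> = (5589 + 891 * s) / 512"
    using s5 by (simp add: field_simps)
  finally have r3: "r^3 = (5589 + 891 * s) / 512" .
  have c1: "cap_c = root 3 (5589 + 891 * s) / 8" by (simp add: cap_c_def s_def)
  have r8: "root 3 (512::real) = 8"
    using real_root_pos2[of 3 8] by simp
  have c2: "root 3 ((5589 + 891 * s) / 512) = root 3 (5589 + 891 * s) / 8" using r8 by (simp add: real_root_divide)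
  have c3: "root 3 ((5589 + 891 * s) / 512) = r"
    unfolding r3[symmetric] using rpos by (simp add: real_root_power_cancel)
  have "cap_c = r" using c1 c2 c3 by simp
  then show "cap_c = (1 + x0 + x0^2) / root 3 (x0^2)" by (simp only: r_def)
qed

lemma Mon_bound: "real (card (Mon n)) \<le> cap_c ^ n"
proof -
  define x0 :: real where "x0 = (sqrt 33 - 1) / 8"
  have cc: "cap_c = (1 + x0 + x0^2) / root 3 (x0^2)" and x0: "0 < x0" "x0 \<le> 1"
    using cap_c_eq unfolding x0_def by auto
  define w where "w = root 3 (x0^2)"
  have wpos: "0 < w" using x0 by (simp add: w_def)
  have w3: "w^3 = x0^2" using x0 by (simp add: w_def real_root_pow_pos2)
  define P where "P = PiE {..<n} (\<lambda>_. {0,1,2::nat})"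
  have fP: "finite P" unfolding P_def by (rule finite_PiE) auto
  have low: "w^n \<le> x0 ^ deg n a" if a: "a \<in> Mon n" for a
  proof -
    have d: "3 * deg n a \<le> 2 * n" using a by (simp add: Mon_def)
    have "(w^n)^3 = (w^3)^n" by (metis power_mult mult.commute)
    also have "\<dots> = x0^(2*n)" using w3 by (simp add: power_mult)
    also have "\<dots> \<le> x0^(3 * deg n a)" using x0 d by (intro power_decreasing) auto
    also have "\<dots> = (x0 ^ deg n a)^3" by (metis power_mult mult.commute)
    finally have c: "(w^n)^Suc 2 \<le> (x0 ^ deg n a)^Suc 2" by (simp only: numeral_3_eq_3 numeral_2_eq_2)
    have "0 \<le> x0 ^ deg n a" using x0 by simp
    then show ?thesis using power_le_imp_le_base[OF c] by blast
  qed
  have "real (card (Mon n)) * w^n = (\<Sum>a\<in>Mon n. w^n)" by simp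
  also have "\<dots> \<le> (\<Sum>a\<in>Mon n. x0 ^ deg n a)" by (rule sum_mono) (rule low)
  also have "\<dots> \<le> (\<Sum>a\<in>P. x0 ^ deg n a)"
    by (rule sum_mono2[OF fP]) (use x0 in \<open>auto simp: Mon_def P_def\<close>)
  also have "\<dots> = (\<Sum>a\<in>P. \<Prod>i<n. x0 ^ a i)" by (simp add: deg_def power_sum)
  also have "\<dots> = (\<Prod>i<n. \<Sum>k\<in>{0,1,2::nat}. x0 ^ k)"
    unfolding P_def by (rule prod_sum_PiE[symmetric]) auto
  also have "\<dots> = (1 + x0 + x0^2)^n"
  proof -
    have e: "(\<Sum>k\<in>{0,1,2::nat}. x0^k) = 1 + x0 + x0^2" by simp
    show ?thesis unfolding e prod_constant card_lessThan ..
  qed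
  finally have "real (card (Mon n)) * w^n \<le> (1 + x0 + x0^2)^n" .
  then have "real (card (Mon n)) \<le> (1 + x0 + x0^2)^n / w^n"
    using wpos by (simp add: field_simps)
  also have "\<dots> = cap_c ^ n" by (simp add: cc w_def power_divide)
  finally show ?thesis .
qed

theorem mainTheorem8:
  shows "\<exists>C::real. C > 0 \<and>
    (\<forall>n::nat. \<forall>A. n \<ge> 1 \<longrightarrow> A \<subseteq> F3vec n \<longrightarrow>
       (\<forall>a\<in>A. \<forall>b\<in>A. \<forall>c\<in>A. (\<forall>i. a i + b i + c i = 0) \<longrightarrow> a = b \<and> b = c) \<longrightarrow>
       real (card A) \<le> C * cap_c ^ n)"
proof (intro exI[of _ 3] conjI allI impI)
  fix n :: nat and A :: "(nat \<Rightarrow> 3) set"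
  assume sub: "A \<subseteq> F3vec n"
    and cap: "\<forall>a\<in>A. \<forall>b\<in>A. \<forall>c\<in>A. (\<forall>i. a i + b i + c i = 0) \<longrightarrow> a = b \<and> b = c"
  have cpos: "0 \<le> cap_c" by (simp add: cap_c_def)
  show "real (card A) \<le> 3 * cap_c ^ n"
  proof (cases "finite A")
    case True
    have "real (card A) \<le> 3 * real (card (Mon n))" using cap_comb[OF True sub cap] by linarith
    also have "\<dots> \<le> 3 * cap_c ^ n" using Mon_bound[of n] by simp
    finally show ?thesis .
  next
    case False then show ?thesis using cpos by simp
  qed
qed (simp)

end
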